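(* Let $m\in\mathbb Z^+$, let $\sigma$ be a linear permutation of $\mathbb Z_m$, and let $\zeta_m$ be a primitive $m$-th root of unity. Suppose one of the following holds: (i) $q$ is a prime with $q=mf+1$ for some even integer $f$; let $\alpha$ be a generator of $\mathbb Z_q^*$, $D_k=\{\alpha^{mi+k}:0\le i\le f-1\}$, and let $\underline a$ be the sequence of period $q$ with $a_0=0$ and $a_i=\zeta_m^k$ for $i\in D_{\sigma(k)}$; (ii) $q=2p$ for a prime $p$ with $q=mf+l$, $f$ even and $l=p+1$; let $\alpha$ be a generator of the cyclic group $\mathbb Z_q^*$, $D_k=\{\alpha^{mi+k}:0\le i\le f-1\}$, and let $\underline a$ be the sequence of period $q$ with $a_i=\zeta_m^k$ for $i\in D_{\sigma(k)}$ and $a_i=0$ for $i\notin\mathbb Z_q^*$. Then $\underline a$ is symmetric except for $a_0$, i.e. $a_i=a_{q-i}$ for all $1\le i\le q-1$.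
   Context: A linear permutation of $\mathbb Z_m$ is a map $x\mapsto ux+v\pmod m$ with $\gcd(u,m)=1$. The sequences defined in (i) and (ii) are called almost $m$-ary $\sigma$-sequences. *)

theory Defs
  imports "HOL-Analysis.Analysis" "HOL-Number_Theory.Number_Theory"
begin

definition lin_perm :: "nat \<Rightarrow> nat \<Rightarrow> nat \<Rightarrow> nat \<Rightarrow> nat" where
  "lin_perm m u v x = (u * x + v) mod m"

definition prim_root_unity :: "nat \<Rightarrow> complex \<Rightarrow> bool" where
  "prim_root_unity m z \<longleftrightarrow> z ^ m = 1 \<and> (\<forall>j. 0 < j \<and> j < m \<longrightarrow> z ^ j \<noteq> 1)"

definition cyc_class :: "nat \<Rightarrow> nat \<Rightarrow> nat \<Rightarrow> nat \<Rightarrow> nat \<Rightarrow> nat set" where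
  "cyc_class q m f \<alpha> k = {\<alpha> ^ (m * i + k) mod q | i. i < f}"

end

theory Submission
  imports Defs
begin


lemma key:
  assumes q1: "q > 1" and pr: "residue_primroot q \<alpha>" and tot: "totient q = m*f"
    and fe: "even f" and m0: "m>0"
    and sq: "\<forall>x<q. [x^2 = 1] (mod q) \<longrightarrow> x = 1 \<or> x = q - 1"
    and i0: "0<i" and iq: "i<q" and ic: "coprime i q"
  shows "\<exists>r<m. i \<in> cyc_class q m f \<alpha> r \<and> q - i \<in> cyc_class q m f \<alpha> r"
proof -
  have ord: "ord q \<alpha> = m*f" and cop: "coprime q \<alpha>" using pr tot by (auto simp: residue_primroot_def)
  have "i \<in> totatives q" using i0 iq ic by (simp add: in_totatives_iff)
  then obtain e where e: "e < m*f" "i = \<alpha>^e mod q"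
    using residue_primroot_is_generator[OF q1 pr] tot unfolding bij_betw_def by auto
  have fpos: "f > 0" using e(1) by (cases f) auto
  define j where "j = e div m"
  define r where "r = e mod m"
  have ej: "e = m*j + r" by (simp add: j_def r_def)
  have jf: "j < f" using e(1) m0 unfolding j_def by (simp add: div_less_iff_less_mult mult.commute)
  have rm: "r < m" using m0 by (simp add: r_def)
  have c1: "[\<alpha>^(m*f) = 1] (mod q)" using ord by (simp add: ord_divides')
  define h where "h = f div 2"
  have fh: "f = 2*h" using fe by (simp add: h_def)
  define x where "x = \<alpha>^(m*h) mod q"
  have xq: "x < q" using q1 by (simp add: x_def)
  have "[x^2 = 1] (mod q)"
  proof -
    have "[x^2 = (\<alpha>^(m*h))^2] (mod q)" unfolding x_def by (simp add: cong_def power_mod)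
    moreover have "(\<alpha>^(m*h))^2 = \<alpha>^(m*f)" by (simp add: fh power_mult[symmetric] mult_ac)
    ultimately show ?thesis using c1 by (metis cong_trans)
  qed
  moreover have "x \<noteq> 1"
  proof
    assume "x = 1"
    hence "[\<alpha>^(m*h) = 1] (mod q)" unfolding x_def using q1 by (simp add: cong_def)
    moreover have "0 < m*h" "m*h < ord q \<alpha>" using m0 fpos fh ord by auto
    ultimately show False using ord_minimal by blast
  qed
  ultimately have xm: "x = q - 1" using sq xq by blast
  define j' where "j' = (j + h) mod f"
  have j'f: "j' < f" using fpos by (simp add: j'_def)
  define t where "t = (j+h) div f"
  have jh: "j+h = f*t + j'" by (simp add: t_def j'_def)
  have A: "\<alpha>^(m*j'+r) * (\<alpha>^(m*f))^t = \<alpha>^e * \<alpha>^(m*h)"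
  proof -
    have "e + m*h = m*j'+r + m*f*t" using ej arg_cong[OF jh, of "\<lambda>z. m*z"] by (simp add: algebra_simps)
    hence "\<alpha>^(e + m*h) = \<alpha>^(m*j'+r + m*f*t)" by simp
    thus ?thesis by (simp add: power_add power_mult)
  qed
  have B: "[\<alpha>^(m*j'+r) * (\<alpha>^(m*f))^t = \<alpha>^(m*j'+r)] (mod q)"
    using cong_mult[OF cong_refl cong_pow[OF c1, of t], of "\<alpha>^(m*j'+r)"] by simp
  have C: "[\<alpha>^e * \<alpha>^(m*h) = i * x] (mod q)" unfolding e(2) x_def
    by (simp add: cong_def mod_mult_eq)
  have c2: "[\<alpha>^(m*j'+r) = i*(q-1)] (mod q)" using A B C xm
    by (metis cong_sym cong_trans)
  obtain i' where i': "i = Suc i'" using i0 by (cases i) auto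
  obtain d' where d': "q = Suc i' + Suc d'" using iq i' by (metis less_imp_Suc_add add_Suc_right add_Suc)
  have "i*(q-1) = (q-i) + i'*q" unfolding i' d' by (simp add: algebra_simps)
  hence "i*(q-1) mod q = (q-i) mod q" by simp
  also have "(q-i) mod q = q - i" using i0 iq by simp
  finally have "i*(q-1) mod q = q - i" .
  hence "\<alpha>^(m*j'+r) mod q = q - i" using c2 by (simp add: cong_def)
  hence "q - i = \<alpha>^(m*j'+r) mod q" by simp
  hence "q - i \<in> cyc_class q m f \<alpha> r" using j'f unfolding cyc_class_def by blast
  moreover have "i \<in> cyc_class q m f \<alpha> r" using jf e(2) ej unfolding cyc_class_def by blast
  ultimately show ?thesis using rm by blast
qed



lemma lin_perm_surj:
  assumes "m > 0" "coprime u m" "r < m"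
  shows "\<exists>k<m. lin_perm m u v k = r"
proof -
  have inj: "inj_on (lin_perm m u v) {..<m}"
  proof (rule inj_onI)
    fix x y assume xy: "x \<in> {..<m}" "y \<in> {..<m}" "lin_perm m u v x = lin_perm m u v y"
    hence "[u*x + v = u*y + v] (mod m)" by (simp add: lin_perm_def cong_def)
    hence "[u*x = u*y] (mod m)" by (simp add: cong_add_rcancel_nat)
    hence "[x = y] (mod m)" using assms(2) by (simp add: cong_mult_lcancel_nat coprime_commute)
    thus "x = y" using xy by (simp add: cong_def)
  qed
  have "lin_perm m u v ` {..<m} \<subseteq> {..<m}" using assms(1) by (auto simp: lin_perm_def)
  hence "lin_perm m u v ` {..<m} = {..<m}" using inj by (simp add: endo_inj_surj)
  thus ?thesis using assms(3) by (metis imageE lessThan_iff)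
qed

lemma sq_prime:
  assumes "prime (q::nat)"
  shows "\<forall>x<q. [x^2 = 1] (mod q) \<longrightarrow> x = 1 \<or> x = q - 1"
proof (intro allI impI)
  fix x assume xq: "x < q" and c: "[x^2 = 1] (mod q)"
  show "x = 1 \<or> x = q - 1"
  proof (cases "x = 0")
    case True thus ?thesis using c assms by (simp add: cong_def)
  next
    case False
    have "q dvd x^2 - 1" using c False cong_altdef_nat[of 1 "x^2" q] by simp
    moreover have "x^2 - 1 = (x - 1)*(x+1)" using False by (simp add: power2_eq_square algebra_simps)
    ultimately have "q dvd (x-1) \<or> q dvd (x+1)" using assms prime_dvd_mult_iff by metis
    thus ?thesis
    proof
      assume "q dvd x - 1"
      moreover have "(x - 1) mod q = x - 1" using xq by simp
      ultimately have "x - 1 = 0" by (simp add: dvd_eq_mod_eq_0)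
      thus ?thesis using False by simp
    next
      assume "q dvd x + 1"
      hence "q \<le> x + 1" using dvd_imp_le[of q "x+1"] by simp
      hence "x = q - 1" using xq by linarith
      thus ?thesis by simp
    qed
  qed
qed

lemma sq_double_prime:
  assumes "prime (p::nat)" "odd p" "q = 2*p"
  shows "\<forall>x<q. [x^2 = 1] (mod q) \<longrightarrow> x = 1 \<or> x = q - 1"
proof (intro allI impI)
  fix x assume xq: "x < q" and c: "[x^2 = 1] (mod q)"
  have q1: "q > 1" using assms prime_gt_1_nat[OF assms(1)] by simp
  show "x = 1 \<or> x = q - 1"
  proof (cases "x = 0")
    case True thus ?thesis using c q1 by (simp add: cong_def)
  next
    case False
    have d: "q dvd x^2 - 1" using c False cong_altdef_nat[of 1 "x^2" q] by simp
    moreover have e: "x^2 - 1 = (x - 1)*(x+1)" using False by (simp add: power2_eq_square algebra_simps)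
    have "p dvd x^2 - 1" using d unfolding assms(3) by (rule dvd_mult_right)
    hence "p dvd (x-1)*(x+1)" using e by simp
    hence "p dvd (x-1) \<or> p dvd (x+1)" using prime_dvd_mult_iff[OF assms(1)] by blast
    moreover have "odd x"
    proof -
      have "x^2 mod q = 1" using c q1 by (simp add: cong_def)
      moreover have "(x^2 mod q) mod 2 = x^2 mod 2"
        using assms(3) mod_mod_cancel[of 2 q "x^2"] by simp
      ultimately have "x^2 mod 2 = 1" by simp
      show ?thesis
      proof
        assume "even x"
        hence "even (x^2)" by simp
        hence "x^2 mod 2 = 0" by (simp only: even_iff_mod_2_eq_zero)
        thus False using \<open>x^2 mod 2 = 1\<close> by simp
      qed
    qed
    moreover have cp: "coprime 2 p" using assms(2) by (simp add: coprime_commute)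
    have e1: "2 dvd x - 1" "2 dvd x + 1" using \<open>odd x\<close> by auto
    have "q dvd (x-1) \<or> q dvd (x+1)"
    proof (cases "p dvd (x-1)")
      case True
      show ?thesis using divides_mult[OF e1(1) True cp] assms(3) by simp
    next
      case False
      hence px: "p dvd (x+1)" using \<open>p dvd (x-1) \<or> p dvd (x+1)\<close> by blast
      show ?thesis using divides_mult[OF e1(2) px cp] assms(3) by simp
    qed
    thus ?thesis
    proof
      assume "q dvd x - 1"
      moreover have "(x - 1) mod q = x - 1" using xq by simp
      ultimately have "x - 1 = 0" by (simp add: dvd_eq_mod_eq_0)
      thus ?thesis using False by simp
    next
      assume "q dvd x + 1"
      hence "q \<le> x + 1" using dvd_imp_le[of q "x+1"] by simp
      hence "x = q - 1" using xq by linarith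
      thus ?thesis by simp
    qed
  qed
qed

theorem proposition8:
  fixes m q f \<alpha> u v :: nat and \<zeta> :: complex and a :: "nat \<Rightarrow> complex"
  assumes "m > 0"
    and "coprime u m"
    and "prim_root_unity m \<zeta>"
    and "(prime q \<and> q = m * f + 1 \<and> even f \<and> residue_primroot q \<alpha>
          \<and> (\<forall>i. a i = a (i mod q)) \<and> a 0 = 0
          \<and> (\<forall>i k. k < m \<longrightarrow> i \<in> cyc_class q m f \<alpha> (lin_perm m u v k) \<longrightarrow> a i = \<zeta> ^ k))
       \<or> (\<exists>p. prime p \<and> q = 2 * p \<and> q = m * f + (p + 1) \<and> even f \<and> residue_primroot q \<alpha>
          \<and> (\<forall>i. a i = a (i mod q))
          \<and> (\<forall>i k. k < m \<longrightarrow> i \<in> cyc_class q m f \<alpha> (lin_perm m u v k) \<longrightarrow> a i = \<zeta> ^ k)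
          \<and> (\<forall>i. i < q \<longrightarrow> \<not> coprime i q \<longrightarrow> a i = 0))"
  shows "\<forall>i. 1 \<le> i \<and> i \<le> q - 1 \<longrightarrow> a i = a (q - i)"
proof (intro allI impI)
  fix i assume i: "1 \<le> i \<and> i \<le> q - 1"
  have gen: "a i = a (q - i)" if q1: "q > 1" and pr: "residue_primroot q \<alpha>" and tot: "totient q = m*f"
    and fe: "even f" and sq: "\<forall>x<q. [x^2 = 1] (mod q) \<longrightarrow> x = 1 \<or> x = q - 1"
    and ic: "coprime i q"
    and ha: "\<forall>i k. k < m \<longrightarrow> i \<in> cyc_class q m f \<alpha> (lin_perm m u v k) \<longrightarrow> a i = \<zeta> ^ k"
  proof -
    have i0: "0 < i" and iq: "i < q" using i q1 by auto
    obtain r where r: "r < m" "i \<in> cyc_class q m f \<alpha> r" "q - i \<in> cyc_class q m f \<alpha> r"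
      using key[OF q1 pr tot fe assms(1) sq i0 iq ic] by blast
    obtain k where k: "k < m" "lin_perm m u v k = r" using lin_perm_surj[OF assms(1,2) r(1)] by blast
    have "i \<in> cyc_class q m f \<alpha> (lin_perm m u v k)" using r(2) k(2) by simp
    hence 1: "a i = \<zeta>^k" using ha k(1) by blast
    have "q - i \<in> cyc_class q m f \<alpha> (lin_perm m u v k)" using r(3) k(2) by simp
    hence 2: "a (q - i) = \<zeta>^k" using ha k(1) by blast
    show ?thesis using 1 2 by simp
  qed
  from assms(4) show "a i = a (q - i)"
  proof
    assume h: "prime q \<and> q = m * f + 1 \<and> even f \<and> residue_primroot q \<alpha>
          \<and> (\<forall>i. a i = a (i mod q)) \<and> a 0 = 0
          \<and> (\<forall>i k. k < m \<longrightarrow> i \<in> cyc_class q m f \<alpha> (lin_perm m u v k) \<longrightarrow> a i = \<zeta> ^ k)"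
    have q1: "q > 1" using h prime_gt_1_nat by blast
    have pq: "prime q" using h by blast
    have "\<not> q dvd i" using i q1 by (auto dest: dvd_imp_le)
    hence "coprime q i" using prime_imp_coprime[OF pq] by blast
    hence ic: "coprime i q" by (simp add: coprime_commute)
    have tot: "totient q = m*f" using h totient_prime[OF pq] by simp
    have sq: "\<forall>x<q. [x^2 = 1] (mod q) \<longrightarrow> x = 1 \<or> x = q - 1" using sq_prime h by blast
    have pr: "residue_primroot q \<alpha>" and fe: "even f"
        and ha: "\<forall>i k. k < m \<longrightarrow> i \<in> cyc_class q m f \<alpha> (lin_perm m u v k) \<longrightarrow> a i = \<zeta> ^ k"
        using h by blast+
    show ?thesis using gen[OF q1 pr tot fe sq ic ha] .
  next
    assume "\<exists>p. prime p \<and> q = 2 * p \<and> q = m * f + (p + 1) \<and> even f \<and> residue_primroot q \<alpha>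
          \<and> (\<forall>i. a i = a (i mod q))
          \<and> (\<forall>i k. k < m \<longrightarrow> i \<in> cyc_class q m f \<alpha> (lin_perm m u v k) \<longrightarrow> a i = \<zeta> ^ k)
          \<and> (\<forall>i. i < q \<longrightarrow> \<not> coprime i q \<longrightarrow> a i = 0)"
    then obtain p where h: "prime p \<and> q = 2 * p \<and> q = m * f + (p + 1) \<and> even f \<and> residue_primroot q \<alpha>
          \<and> (\<forall>i k. k < m \<longrightarrow> i \<in> cyc_class q m f \<alpha> (lin_perm m u v k) \<longrightarrow> a i = \<zeta> ^ k)
          \<and> (\<forall>i. i < q \<longrightarrow> \<not> coprime i q \<longrightarrow> a i = 0)" by blast
    have p1: "p > 1" using h prime_gt_1_nat by blast
    have "q = 2*p" "q = m*f + (p+1)" using h by blast+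
    hence mf: "m*f = p - 1" by linarith
    have podd: "odd p"
    proof
      assume "even p"
      have pp: "prime p" using h by blast
      have "p = 2"
      proof (rule ccontr)
        assume "p \<noteq> 2"
        hence "p > 2" using p1 by simp
        hence "odd p" using prime_odd_nat pp by blast
        thus False using \<open>even p\<close> by simp
      qed
      hence "m*f = 1" using mf by simp
      hence "f = 1" by simp
      moreover have "even f" using h by blast
      ultimately show False by simp
    qed
    have q1: "q > 1" using h p1 by simp
    have tot: "totient q = m*f" using h podd mf by (simp add: totient_double totient_prime)
    show ?thesis
    proof (cases "coprime i q")
      case True
      have pr: "residue_primroot q \<alpha>" and fe: "even f" and pp: "prime p" and q2: "q = 2*p"
        and ha: "\<forall>i k. k < m \<longrightarrow> i \<in> cyc_class q m f \<alpha> (lin_perm m u v k) \<longrightarrow> a i = \<zeta> ^ k"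
        using h by blast+
      show ?thesis using gen[OF q1 pr tot fe sq_double_prime[OF pp podd q2] True ha] .
    next
      case False
      have iq: "i \<le> q" using i by linarith
      have d: "gcd i q dvd q - i" by (simp add: dvd_diff_nat)
      have "\<not> coprime (q - i) q"
      proof
        assume "coprime (q - i) q"
        hence "gcd (q - i) q = 1" by simp
        moreover have "gcd i q dvd gcd (q - i) q" using d by simp
        ultimately have "gcd i q = 1" by simp
        thus False using False coprime_iff_gcd_eq_1 by blast
      qed
      moreover have "i < q" "q - i < q" using i q1 by auto
      moreover have z: "\<forall>i. i < q \<longrightarrow> \<not> coprime i q \<longrightarrow> a i = 0" using h by blast
      ultimately have "a i = 0" "a (q - i) = 0" using False by simp_all
      thus ?thesis by simp
    qed
  qed
qed

end
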